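(* Let $q\ge2$, let $(\varepsilon_t)_{t\in\mathbb Z}$ be i.i.d. with a continuous distribution, and $X_t=\sum_{l=0}^q\varepsilon_{t-l}$. For OPs of length $m=3$: (i) for every $2\le k\le q-1$ and all $i,j$, $p_{ij}(k)=p_ip_j$; (ii) $p_{ij}(k)=p_ip_j$ for $k\ge q+3$; (iii) the probabilities $p_{ij}(1)$, $p_{ij}(q)$, $p_{ij}(q+1)$, $p_{ij}(q+2)$ do not depend on $q$ (for fixed innovation distribution). Consequently, the long-run covariance matrix $\Sigma$ is the same for all $q\ge2$.
   Context: $\Pi_t$ is the OP of $(X_t,X_{t+1},X_{t+2})$, i.e. the permutation $\pi\in S_3$ with $\pi^{(j)}<\pi^{(k)}\iff X_{t+j-1}<X_{t+k-1}$; OPs in lexicographic order are $\pi_1=(1,2,3)$, $\pi_2=(1,3,2)$, $\pi_3=(2,1,3)$, $\pi_4=(2,3,1)$, $\pi_5=(3,1,2)$, $\pi_6=(3,2,1)$. $p_i=\mathbb P(\Pi_0=\pi_i)$, $p_{ij}(k)=\mathbb P(\Pi_0=\pi_i,\Pi_k=\pi_j)$, and $\Sigma=(\sigma_{ij})$ with $\sigma_{ij}=p_i(\delta_{ij}-p_j)+\sum_{k=1}^\infty(p_{ij}(k)+p_{ji}(k)-2p_ip_j)$. *)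

theory Defs
  imports "HOL-Probability.Probability"
begin

text \<open>Ordinal patterns of length 3, in lexicographic order pi_1,...,pi_6
  (index i ranges over 1..6).\<close>
definition op_pats :: "nat list list" where
  "op_pats = [[1,2,3],[1,3,2],[2,1,3],[2,3,1],[3,1,2],[3,2,1]]"

definition op_pat :: "nat \<Rightarrow> nat list" where
  "op_pat i = op_pats ! (i - 1)"

definition has_op :: "nat list \<Rightarrow> real list \<Rightarrow> bool" where
  "has_op \<pi> x \<longleftrightarrow> (\<forall>j<3. \<forall>k<3. \<pi> ! j < \<pi> ! k \<longleftrightarrow> x ! j < x ! k)"

definition MA :: "nat \<Rightarrow> (int \<Rightarrow> 'a \<Rightarrow> real) \<Rightarrow> int \<Rightarrow> 'a \<Rightarrow> real" where
  "MA q \<epsilon> t \<omega> = (\<Sum>l\<le>q. \<epsilon> (t - int l) \<omega>)"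

definition op_event :: "'a measure \<Rightarrow> (int \<Rightarrow> 'a \<Rightarrow> real) \<Rightarrow> nat \<Rightarrow> int \<Rightarrow> nat \<Rightarrow> 'a set" where
  "op_event M \<epsilon> q t i = {\<omega> \<in> space M.
     has_op (op_pat i) [MA q \<epsilon> t \<omega>, MA q \<epsilon> (t+1) \<omega>, MA q \<epsilon> (t+2) \<omega>]}"

definition p1 :: "'a measure \<Rightarrow> (int \<Rightarrow> 'a \<Rightarrow> real) \<Rightarrow> nat \<Rightarrow> nat \<Rightarrow> real" where
  "p1 M \<epsilon> q i = measure M (op_event M \<epsilon> q 0 i)"

definition p2 :: "'a measure \<Rightarrow> (int \<Rightarrow> 'a \<Rightarrow> real) \<Rightarrow> nat \<Rightarrow> nat \<Rightarrow> nat \<Rightarrow> nat \<Rightarrow> real" where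
  "p2 M \<epsilon> q i j k = measure M (op_event M \<epsilon> q 0 i \<inter> op_event M \<epsilon> q (int k) j)"

definition Sigma :: "'a measure \<Rightarrow> (int \<Rightarrow> 'a \<Rightarrow> real) \<Rightarrow> nat \<Rightarrow> nat \<Rightarrow> nat \<Rightarrow> real" where
  "Sigma M \<epsilon> q i j =
     p1 M \<epsilon> q i * ((if i = j then 1 else 0) - p1 M \<epsilon> q j)
     + (\<Sum>k. p2 M \<epsilon> q i j (Suc k) + p2 M \<epsilon> q j i (Suc k)
             - 2 * p1 M \<epsilon> q i * p1 M \<epsilon> q j)"

definition iid_continuous :: "'a measure \<Rightarrow> (int \<Rightarrow> 'a \<Rightarrow> real) \<Rightarrow> bool" where
  "iid_continuous M \<epsilon> \<longleftrightarrow> prob_space M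
     \<and> prob_space.indep_vars M (\<lambda>_. borel) \<epsilon> UNIV
     \<and> (\<forall>t. distr M borel (\<epsilon> t) = distr M borel (\<epsilon> 0))
     \<and> (\<forall>x. measure (distr M borel (\<epsilon> 0)) {x} = 0)"

end

theory Submission
  imports Defs
begin

lemma law:
  fixes M :: "'a measure" and e :: "int \<Rightarrow> 'a \<Rightarrow> real" and g :: "nat \<Rightarrow> int"
  assumes iid: "iid_continuous M e" and inj: "inj_on g {..<n}" and n: "n > 0"
    and S: "{x \<in> space (PiM {..<n} (\<lambda>_. borel)). \<Phi> x} \<in> sets (PiM {..<n} (\<lambda>_. borel))"
  shows "measure M {\<omega> \<in> space M. \<Phi> (\<lambda>i\<in>{..<n}. e (g i) \<omega>)}
       = measure (PiM {..<n} (\<lambda>_. distr M borel (e 0))) {x \<in> space (PiM {..<n} (\<lambda>_. borel)). \<Phi> x}"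
proof -
  let ?mu = "distr M borel (e 0)"
  let ?N = "{..<n}" and ?K = "g ` {..<n}"
  interpret prob_space M using iid by (simp add: iid_continuous_def)
  have ind: "indep_vars (\<lambda>_. borel) e UNIV" using iid by (simp add: iid_continuous_def)
  have dist: "\<And>t. distr M borel (e t) = ?mu" using iid by (simp add: iid_continuous_def)
  have rv: "\<And>t. random_variable borel (e t)" using ind by (simp add: indep_vars_def)
  have pmu: "prob_space ?mu" by (rule prob_space_distr) (simp add: rv)
  have Kne: "?K \<noteq> {}" using n by auto
  have setsK: "sets (PiM ?K (\<lambda>_. ?mu)) = sets (PiM ?K (\<lambda>_. borel))"
    by (rule sets_PiM_cong) auto
  have setsN: "sets (PiM ?N (\<lambda>_. ?mu)) = sets (PiM ?N (\<lambda>_. borel))"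
    by (rule sets_PiM_cong) auto
  define Y where "Y = (\<lambda>\<omega>. \<lambda>s\<in>?K. e s \<omega>)"
  define R where "R = (\<lambda>x::int\<Rightarrow>real. \<lambda>i\<in>?N. x (g i))"
  define S' where "S' = {x \<in> space (PiM ?N (\<lambda>_. borel)). \<Phi> x}"
  have Ym: "Y \<in> M \<rightarrow>\<^sub>M PiM ?K (\<lambda>_. borel)"
    unfolding Y_def by (intro measurable_restrict) (simp add: rv)
  have Rm: "R \<in> PiM ?K (\<lambda>_. borel) \<rightarrow>\<^sub>M PiM ?N (\<lambda>_. borel)"
    unfolding R_def by (intro measurable_restrict measurable_component_singleton) auto
  have D: "distr M (PiM ?K (\<lambda>_. borel)) Y = PiM ?K (\<lambda>_. ?mu)"
  proof -
    have "indep_vars (\<lambda>_. borel) e ?K" by (rule indep_vars_subset[OF ind]) auto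
    then have "distr M (PiM ?K (\<lambda>_. borel)) Y = PiM ?K (\<lambda>s. distr M borel (e s))"
      unfolding Y_def using indep_vars_iff_distr_eq_PiM[OF Kne rv] by simp
    also have "\<dots> = PiM ?K (\<lambda>_. ?mu)" by (rule PiM_cong) (auto intro: dist)
    finally show ?thesis .
  qed
  have RY: "\<And>\<omega>. R (Y \<omega>) = (\<lambda>i\<in>?N. e (g i) \<omega>)"
    unfolding R_def Y_def by (auto simp: fun_eq_iff)
  have RS: "R -` S' \<inter> space (PiM ?K (\<lambda>_. borel)) \<in> sets (PiM ?K (\<lambda>_. borel))"
    using Rm S unfolding S'_def by (rule measurable_sets)
  have "{\<omega> \<in> space M. \<Phi> (\<lambda>i\<in>?N. e (g i) \<omega>)} = Y -` (R -` S' \<inter> space (PiM ?K (\<lambda>_. borel))) \<inter> space M"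
    using measurable_space[OF Ym] measurable_space[OF Rm] unfolding S'_def by (auto simp: RY[symmetric])
  then have "measure M {\<omega> \<in> space M. \<Phi> (\<lambda>i\<in>?N. e (g i) \<omega>)}
      = measure (distr M (PiM ?K (\<lambda>_. borel)) Y) (R -` S' \<inter> space (PiM ?K (\<lambda>_. borel)))"
    using measure_distr[OF Ym RS] by simp
  also have "\<dots> = measure (PiM ?K (\<lambda>_. ?mu)) (R -` S' \<inter> space (PiM ?K (\<lambda>_. ?mu)))"
    using D sets_eq_imp_space_eq[OF setsK] by (simp only:)
  also have "\<dots> = measure (distr (PiM ?K (\<lambda>_. ?mu)) (PiM ?N (\<lambda>_. ?mu)) R) S'"
  proof -
    have Rm': "R \<in> PiM ?K (\<lambda>_. ?mu) \<rightarrow>\<^sub>M PiM ?N (\<lambda>_. ?mu)"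
      using Rm by (simp add: measurable_cong_sets[OF setsK setsN])
    show ?thesis using Rm' S setsN unfolding S'_def by (subst measure_distr) auto
  qed
  also have "distr (PiM ?K (\<lambda>_. ?mu)) (PiM ?N (\<lambda>_. ?mu)) R = PiM ?N (\<lambda>_. ?mu)"
    unfolding R_def using distr_PiM_reindex[of ?K "\<lambda>_. ?mu" g ?N] pmu inj by simp
  finally show ?thesis unfolding S'_def .
qed

definition opf :: "nat list \<Rightarrow> real \<Rightarrow> real \<Rightarrow> real \<Rightarrow> real \<Rightarrow> bool" where
  "opf \<pi> a b c d = has_op \<pi> [0, c - a, c + d - a - b]"

lemma all_less3: "(\<forall>j<(3::nat). P j) \<longleftrightarrow> P 0 \<and> P 1 \<and> P 2"
  by (auto simp: numeral_3_eq_3 numeral_2_eq_2 less_Suc_eq)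

lemma has_op_expand: "has_op \<pi> [a, b, c] \<longleftrightarrow>
   ((\<pi>!0 < \<pi>!1) = (a < b)) \<and> ((\<pi>!0 < \<pi>!2) = (a < c)) \<and> ((\<pi>!1 < \<pi>!0) = (b < a)) \<and>
   ((\<pi>!1 < \<pi>!2) = (b < c)) \<and> ((\<pi>!2 < \<pi>!0) = (c < a)) \<and> ((\<pi>!2 < \<pi>!1) = (c < b))"
  unfolding has_op_def all_less3 by auto

lemma has_op_shift: "has_op \<pi> [a, b, c] \<longleftrightarrow> has_op \<pi> [0, b - a, c - a]"
  unfolding has_op_expand by auto

lemma pred_opf[measurable]:
  assumes [measurable]: "f0 \<in> borel_measurable N" "f1 \<in> borel_measurable N"
     "f2 \<in> borel_measurable N" "f3 \<in> borel_measurable N"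
  shows "Measurable.pred N (\<lambda>x. opf \<pi> (f0 x) (f1 x) (f2 x) (f3 x))"
  unfolding opf_def has_op_expand by measurable

lemma MA_succ: "MA q e (t+1) \<omega> = MA q e t \<omega> + e (t+1) \<omega> - e (t - int q) \<omega>"
proof (cases q)
  case 0 then show ?thesis by (simp add: MA_def)
next
  case (Suc n)
  have "MA q e (t+1) \<omega> = e (t+1) \<omega> + (\<Sum>i\<le>n. e (t + 1 - int (Suc i)) \<omega>)"
    unfolding MA_def Suc by (subst sum.atMost_Suc_shift) simp
  also have "(\<Sum>i\<le>n. e (t + 1 - int (Suc i)) \<omega>) = (\<Sum>i\<le>n. e (t - int i) \<omega>)"
    by (intro sum.cong) (auto simp: algebra_simps)
  also have "MA q e t \<omega> = (\<Sum>i\<le>n. e (t - int i) \<omega>) + e (t - int q) \<omega>"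
    unfolding MA_def Suc by (subst sum.atMost_Suc) simp
  ultimately show ?thesis by simp
qed

lemma op_event_eq: "op_event M e q t i = {\<omega> \<in> space M.
   opf (op_pat i) (e (t - int q) \<omega>) (e (t + 1 - int q) \<omega>) (e (t+1) \<omega>) (e (t+2) \<omega>)}"
proof -
  have h1: "MA q e (t+1) \<omega> - MA q e t \<omega> = e (t+1) \<omega> - e (t - int q) \<omega>" for \<omega>
    using MA_succ[of q e t] by simp
  have h2: "MA q e (t+2) \<omega> - MA q e t \<omega> = e (t+1) \<omega> + e (t+2) \<omega> - e (t - int q) \<omega> - e (t + 1 - int q) \<omega>" for \<omega>
    using MA_succ[of q e t \<omega>] MA_succ[of q e "t+1" \<omega>] by (simp add: algebra_simps)
  show ?thesis unfolding op_event_def opf_def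
    by (intro Collect_cong conj_cong refl) (subst has_op_shift, simp only: h1 h2)
qed


lemma indep2:
  fixes M :: "'a measure" and e :: "int \<Rightarrow> 'a \<Rightarrow> real"
  assumes iid: "iid_continuous M e" and J: "J1 \<inter> J2 = {}"
    and S1: "{x \<in> space (PiM J1 (\<lambda>_. borel)). \<Phi>1 x} \<in> sets (PiM J1 (\<lambda>_. borel))"
    and S2: "{x \<in> space (PiM J2 (\<lambda>_. borel)). \<Phi>2 x} \<in> sets (PiM J2 (\<lambda>_. borel))"
  shows "measure M ({\<omega> \<in> space M. \<Phi>1 (\<lambda>s\<in>J1. e s \<omega>)} \<inter> {\<omega> \<in> space M. \<Phi>2 (\<lambda>s\<in>J2. e s \<omega>)})
    = measure M {\<omega> \<in> space M. \<Phi>1 (\<lambda>s\<in>J1. e s \<omega>)} * measure M {\<omega> \<in> space M. \<Phi>2 (\<lambda>s\<in>J2. e s \<omega>)}"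
proof -
  interpret prob_space M using iid by (simp add: iid_continuous_def)
  have ind: "indep_vars (\<lambda>_. borel) e UNIV" using iid by (simp add: iid_continuous_def)
  define K where "K = (\<lambda>j::nat. if j = 0 then J1 else J2)"
  have "indep_vars (\<lambda>j. PiM (K j) (\<lambda>_. borel)) (\<lambda>j \<omega>. restrict (\<lambda>i. e i \<omega>) (K j)) {0,1}"
    by (rule indep_vars_restrict[OF ind]) (use J in \<open>auto simp: K_def disjoint_family_on_def\<close>)
  then have IS: "indep_sets (\<lambda>j. sigma_sets (space M) {(\<lambda>\<omega>. restrict (\<lambda>i. e i \<omega>) (K j)) -` A \<inter> space M | A. A \<in> sets (PiM (K j) (\<lambda>_. borel))}) {0,1}"
    unfolding indep_vars_def by blast
  have K0: "K 0 = J1" "K 1 = J2" by (simp_all add: K_def)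
  define A where "A = (\<lambda>j::nat. if j = 0 then {\<omega> \<in> space M. \<Phi>1 (\<lambda>s\<in>J1. e s \<omega>)} else {\<omega> \<in> space M. \<Phi>2 (\<lambda>s\<in>J2. e s \<omega>)})"
  have A0: "A 0 = (\<lambda>\<omega>. restrict (\<lambda>i. e i \<omega>) (K 0)) -` {x \<in> space (PiM J1 (\<lambda>_. borel)). \<Phi>1 x} \<inter> space M"
    by (auto simp: A_def K_def space_PiM)
  have A1: "A 1 = (\<lambda>\<omega>. restrict (\<lambda>i. e i \<omega>) (K 1)) -` {x \<in> space (PiM J2 (\<lambda>_. borel)). \<Phi>2 x} \<inter> space M"
    by (auto simp: A_def K_def space_PiM)
  have "\<forall>j\<in>{0,1}. A j \<in> sigma_sets (space M) {(\<lambda>\<omega>. restrict (\<lambda>i. e i \<omega>) (K j)) -` A \<inter> space M | A. A \<in> sets (PiM (K j) (\<lambda>_. borel))}"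
  proof
    fix j :: nat assume "j \<in> {0,1}"
    then have "A j \<in> {(\<lambda>\<omega>. restrict (\<lambda>i. e i \<omega>) (K j)) -` A \<inter> space M | A. A \<in> sets (PiM (K j) (\<lambda>_. borel))}"
    proof
      assume j0: "j = 0" show ?thesis using S1 unfolding j0 A0 K0 by blast
    next
      assume "j \<in> {1}" then have j1: "j = 1" by simp
      show ?thesis using S2 unfolding j1 A1 K0 by blast
    qed
    then show "A j \<in> sigma_sets (space M) {(\<lambda>\<omega>. restrict (\<lambda>i. e i \<omega>) (K j)) -` A \<inter> space M | A. A \<in> sets (PiM (K j) (\<lambda>_. borel))}"
      by (rule sigma_sets.Basic)
  qed
  from indep_setsD[OF IS _ _ _ this] have "prob (\<Inter>j\<in>{0,1}. A j) = (\<Prod>j\<in>{0,1}. prob (A j))" by auto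
  then show ?thesis by (simp add: A_def Int_commute)
qed

lemma L_p1:
  fixes M :: "'a measure" and e :: "int \<Rightarrow> 'a \<Rightarrow> real"
  assumes iid: "iid_continuous M e" and q: "q \<ge> 1"
  shows "measure M (op_event M e q t i) = measure (PiM {..<(4::nat)} (\<lambda>_. distr M borel (e 0)))
     {x \<in> space (PiM {..<(4::nat)} (\<lambda>_. borel)). opf (op_pat i) (x 0) (x 1) (x 2) (x 3)}"
proof -
  let ?L = "[t - int q, t + 1 - int q, t+1, t+2]"
  have inj: "inj_on (nth ?L) {..<(4::nat)}" by (rule inj_on_nth) (use q in auto)
  have S: "{x \<in> space (PiM {..<(4::nat)} (\<lambda>_. borel)). opf (op_pat i) (x 0) (x 1) (x 2) (x 3)} \<in> sets (PiM {..<(4::nat)} (\<lambda>_. borel))"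
    unfolding pred_def[symmetric] by (intro pred_opf measurable_component_singleton) auto
  have "op_event M e q t i = {\<omega> \<in> space M. (\<lambda>x. opf (op_pat i) (x 0) (x 1) (x 2) (x 3)) (\<lambda>m\<in>{..<(4::nat)}. e (?L ! m) \<omega>)}"
    unfolding op_event_eq by simp
  with law[OF iid inj _ S] show ?thesis by simp
qed

lemma L_ind:
  fixes M :: "'a measure" and e :: "int \<Rightarrow> 'a \<Rightarrow> real"
  assumes iid: "iid_continuous M e" and q: "q \<ge> 1"
    and D: "{- int q, 1 - int q, 1, 2} \<inter> {int k - int q, int k + 1 - int q, int k + 1, int k + 2} = {}"
  shows "p2 M e q i j k = p1 M e q i * p1 M e q j"
proof -
  define J1 where "J1 = {- int q, 1 - int q, 1, 2}"
  define J2 where "J2 = {int k - int q, int k + 1 - int q, int k + 1, int k + 2}"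
  define F1 where "F1 = (\<lambda>x::int\<Rightarrow>real. opf (op_pat i) (x (- int q)) (x (1 - int q)) (x 1) (x 2))"
  define F2 where "F2 = (\<lambda>x::int\<Rightarrow>real. opf (op_pat j) (x (int k - int q)) (x (int k + 1 - int q)) (x (int k + 1)) (x (int k + 2)))"
  have E1: "op_event M e q 0 i = {\<omega> \<in> space M. F1 (\<lambda>s\<in>J1. e s \<omega>)}"
    unfolding op_event_eq F1_def J1_def by simp
  have E2: "op_event M e q (int k) j = {\<omega> \<in> space M. F2 (\<lambda>s\<in>J2. e s \<omega>)}"
    unfolding op_event_eq F2_def J2_def by simp
  have S1: "{x \<in> space (PiM J1 (\<lambda>_. borel)). F1 x} \<in> sets (PiM J1 (\<lambda>_. borel))"
    unfolding pred_def[symmetric] F1_def by (intro pred_opf measurable_component_singleton) (auto simp: J1_def)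
  have S2: "{x \<in> space (PiM J2 (\<lambda>_. borel)). F2 x} \<in> sets (PiM J2 (\<lambda>_. borel))"
    unfolding pred_def[symmetric] F2_def by (intro pred_opf measurable_component_singleton) (auto simp: J2_def)
  have "p2 M e q i j k = measure M (op_event M e q 0 i) * measure M (op_event M e q (int k) j)"
    unfolding p2_def E1 E2 by (rule indep2[OF iid _ S1 S2]) (use D in \<open>simp add: J1_def J2_def\<close>)
  also have "measure M (op_event M e q (int k) j) = p1 M e q j"
    unfolding p1_def using L_p1[OF iid q, of "int k" j] L_p1[OF iid q, of 0 j] by simp
  finally show ?thesis by (simp add: p1_def)
qed

lemma p2_law:
  fixes M :: "'a measure" and e :: "int \<Rightarrow> 'a \<Rightarrow> real" and L :: "int list"
  assumes iid: "iid_continuous M e" and dL: "distinct L" and n: "length L = n" "n > 0"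
    and eq: "\<And>\<omega>. (opf (op_pat i) (e (0 - int q) \<omega>) (e (0 + 1 - int q) \<omega>) (e (0+1) \<omega>) (e (0+2) \<omega>)
       \<and> opf (op_pat j) (e (int k - int q) \<omega>) (e (int k + 1 - int q) \<omega>) (e (int k + 1) \<omega>) (e (int k + 2) \<omega>))
       = \<Phi> (\<lambda>m\<in>{..<n}. e (L ! m) \<omega>)"
    and meas: "Measurable.pred (PiM {..<n} (\<lambda>_. borel)) \<Phi>"
  shows "p2 M e q i j k = measure (PiM {..<n} (\<lambda>_. distr M borel (e 0))) {x \<in> space (PiM {..<n} (\<lambda>_. borel)). \<Phi> x}"
proof -
  have inj: "inj_on (nth L) {..<n}" by (rule inj_on_nth) (use dL n in auto)
  have "op_event M e q 0 i \<inter> op_event M e q (int k) j = {\<omega> \<in> space M. \<Phi> (\<lambda>m\<in>{..<n}. e (L ! m) \<omega>)}"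
    unfolding op_event_eq eq[symmetric] by auto
  then show ?thesis unfolding p2_def using law[OF iid inj n(2) meas[unfolded pred_def]] by simp
qed


lemma case1:
  fixes M :: "'a measure" and e :: "int \<Rightarrow> 'a \<Rightarrow> real"
  assumes iid: "iid_continuous M e" and q: "q \<ge> 2"
  shows "p2 M e q i j (1) = measure (PiM {..<(6::nat)} (\<lambda>_. distr M borel (e 0)))
    {x \<in> space (PiM {..<(6::nat)} (\<lambda>_. borel)). opf (op_pat i) (x 0) (x 1) (x 3) (x 4) \<and> opf (op_pat j) (x 1) (x 2) (x 4) (x 5)}"
proof (rule p2_law[OF iid, where L="[- int q, 1 - int q, 2 - int q, 1, 2, 3]"])
  show "distinct ([- int q, 1 - int q, 2 - int q, 1, 2, 3])" using q by auto
  show "Measurable.pred (PiM {..<(6::nat)} (\<lambda>_. borel)) (\<lambda>x. opf (op_pat i) (x 0) (x 1) (x 3) (x 4) \<and> opf (op_pat j) (x 1) (x 2) (x 4) (x 5))"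
    by (intro pred_intros_logic pred_opf measurable_component_singleton) auto
qed (simp_all add: algebra_simps)

lemma caseq:
  fixes M :: "'a measure" and e :: "int \<Rightarrow> 'a \<Rightarrow> real"
  assumes iid: "iid_continuous M e" and q: "q \<ge> 2"
  shows "p2 M e q i j (q) = measure (PiM {..<(7::nat)} (\<lambda>_. distr M borel (e 0)))
    {x \<in> space (PiM {..<(7::nat)} (\<lambda>_. borel)). opf (op_pat i) (x 0) (x 1) (x 3) (x 4) \<and> opf (op_pat j) (x 2) (x 3) (x 5) (x 6)}"
proof (rule p2_law[OF iid, where L="[- int q, 1 - int q, 0, 1, 2, int q + 1, int q + 2]"])
  show "distinct ([- int q, 1 - int q, 0, 1, 2, int q + 1, int q + 2])" using q by auto
  show "Measurable.pred (PiM {..<(7::nat)} (\<lambda>_. borel)) (\<lambda>x. opf (op_pat i) (x 0) (x 1) (x 3) (x 4) \<and> opf (op_pat j) (x 2) (x 3) (x 5) (x 6))"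
    by (intro pred_intros_logic pred_opf measurable_component_singleton) auto
qed (simp_all add: algebra_simps)

lemma caseq1:
  fixes M :: "'a measure" and e :: "int \<Rightarrow> 'a \<Rightarrow> real"
  assumes iid: "iid_continuous M e" and q: "q \<ge> 2"
  shows "p2 M e q i j (q + 1) = measure (PiM {..<(6::nat)} (\<lambda>_. distr M borel (e 0)))
    {x \<in> space (PiM {..<(6::nat)} (\<lambda>_. borel)). opf (op_pat i) (x 0) (x 1) (x 2) (x 3) \<and> opf (op_pat j) (x 2) (x 3) (x 4) (x 5)}"
proof (rule p2_law[OF iid, where L="[- int q, 1 - int q, 1, 2, int q + 2, int q + 3]"])
  show "distinct ([- int q, 1 - int q, 1, 2, int q + 2, int q + 3])" using q by auto
  show "Measurable.pred (PiM {..<(6::nat)} (\<lambda>_. borel)) (\<lambda>x. opf (op_pat i) (x 0) (x 1) (x 2) (x 3) \<and> opf (op_pat j) (x 2) (x 3) (x 4) (x 5))"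
    by (intro pred_intros_logic pred_opf measurable_component_singleton) auto
qed (simp_all add: algebra_simps)

lemma caseq2:
  fixes M :: "'a measure" and e :: "int \<Rightarrow> 'a \<Rightarrow> real"
  assumes iid: "iid_continuous M e" and q: "q \<ge> 2"
  shows "p2 M e q i j (q + 2) = measure (PiM {..<(7::nat)} (\<lambda>_. distr M borel (e 0)))
    {x \<in> space (PiM {..<(7::nat)} (\<lambda>_. borel)). opf (op_pat i) (x 0) (x 1) (x 2) (x 3) \<and> opf (op_pat j) (x 3) (x 4) (x 5) (x 6)}"
proof (rule p2_law[OF iid, where L="[- int q, 1 - int q, 1, 2, 3, int q + 3, int q + 4]"])
  show "distinct ([- int q, 1 - int q, 1, 2, 3, int q + 3, int q + 4])" using q by auto
  show "Measurable.pred (PiM {..<(7::nat)} (\<lambda>_. borel)) (\<lambda>x. opf (op_pat i) (x 0) (x 1) (x 2) (x 3) \<and> opf (op_pat j) (x 3) (x 4) (x 5) (x 6))"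
    by (intro pred_intros_logic pred_opf measurable_component_singleton) auto
qed (simp_all add: algebra_simps)


lemma disj_ok:
  assumes "q \<ge> 1" and "(2 \<le> k \<and> k \<le> q - 1) \<or> k \<ge> q + 3"
  shows "{- int q, 1 - int q, 1, 2} \<inter> {int k - int q, int k + 1 - int q, int k + 1, int k + 2} = {}"
  using assms by auto

lemma Sigma_fin:
  fixes M :: "'a measure" and e :: "int \<Rightarrow> 'a \<Rightarrow> real"
  assumes iid: "iid_continuous M e" and q: "q \<ge> 2"
  shows "Sigma M e q i j = p1 M e q i * ((if i = j then 1 else 0) - p1 M e q j)
    + ((p2 M e q i j 1 + p2 M e q j i 1 - 2 * p1 M e q i * p1 M e q j)
     + (p2 M e q i j q + p2 M e q j i q - 2 * p1 M e q i * p1 M e q j)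
     + (p2 M e q i j (q+1) + p2 M e q j i (q+1) - 2 * p1 M e q i * p1 M e q j)
     + (p2 M e q i j (q+2) + p2 M e q j i (q+2) - 2 * p1 M e q i * p1 M e q j))"
proof -
  define f where "f = (\<lambda>k. p2 M e q i j (Suc k) + p2 M e q j i (Suc k) - 2 * p1 M e q i * p1 M e q j)"
  have z: "f n = 0" if "n \<notin> {0, q - 1, q, q + 1}" for n
  proof -
    have "(2 \<le> Suc n \<and> Suc n \<le> q - 1) \<or> Suc n \<ge> q + 3" using that q by auto
    then have D: "{- int q, 1 - int q, 1, 2} \<inter> {int (Suc n) - int q, int (Suc n) + 1 - int q, int (Suc n) + 1, int (Suc n) + 2} = {}"
      using q by (intro disj_ok) auto
    have q1: "q \<ge> 1" using q by simp
    show ?thesis unfolding f_def using L_ind[OF iid q1 D, of i j] L_ind[OF iid q1 D, of j i] by simp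
  qed
  have "suminf f = sum f {0, q - 1, q, q + 1}" by (rule suminf_finite) (use z in auto)
  also have "\<dots> = f 0 + f (q - 1) + f q + f (q + 1)"
  proof -
    obtain r where r: "q = Suc (Suc r)" using q by (metis add_2_eq_Suc le_Suc_ex)
    show ?thesis unfolding r by (simp add: add.assoc)
  qed
  finally have "suminf f = f 0 + f (q - 1) + f q + f (q + 1)" .
  moreover have "Suc (q - 1) = q" using q by simp
  ultimately show ?thesis unfolding Sigma_def f_def[symmetric] by (simp add: f_def add.assoc)
qed

theorem mainTheorem15:
  fixes M1 :: "'a measure" and \<epsilon>1 :: "int \<Rightarrow> 'a \<Rightarrow> real"
    and M2 :: "'b measure" and \<epsilon>2 :: "int \<Rightarrow> 'b \<Rightarrow> real"
    and q1 q2 :: nat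
  assumes "iid_continuous M1 \<epsilon>1" and "iid_continuous M2 \<epsilon>2"
    and same_dist: "distr M1 borel (\<epsilon>1 0) = distr M2 borel (\<epsilon>2 0)"
    and "q1 \<ge> 2" and "q2 \<ge> 2"
  shows
    "(\<forall>i\<in>{1..6}. \<forall>j\<in>{1..6}. \<forall>k. 2 \<le> k \<and> k \<le> q1 - 1 \<longrightarrow>
        p2 M1 \<epsilon>1 q1 i j k = p1 M1 \<epsilon>1 q1 i * p1 M1 \<epsilon>1 q1 j)
   \<and> (\<forall>i\<in>{1..6}. \<forall>j\<in>{1..6}. \<forall>k. k \<ge> q1 + 3 \<longrightarrow>
        p2 M1 \<epsilon>1 q1 i j k = p1 M1 \<epsilon>1 q1 i * p1 M1 \<epsilon>1 q1 j)
   \<and> (\<forall>i\<in>{1..6}. \<forall>j\<in>{1..6}.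
        p2 M1 \<epsilon>1 q1 i j 1 = p2 M2 \<epsilon>2 q2 i j 1
      \<and> p2 M1 \<epsilon>1 q1 i j q1 = p2 M2 \<epsilon>2 q2 i j q2
      \<and> p2 M1 \<epsilon>1 q1 i j (q1 + 1) = p2 M2 \<epsilon>2 q2 i j (q2 + 1)
      \<and> p2 M1 \<epsilon>1 q1 i j (q1 + 2) = p2 M2 \<epsilon>2 q2 i j (q2 + 2))
   \<and> (\<forall>i\<in>{1..6}. \<forall>j\<in>{1..6}. Sigma M1 \<epsilon>1 q1 i j = Sigma M2 \<epsilon>2 q2 i j)"
proof -
  have i1: "iid_continuous M1 \<epsilon>1" and i2: "iid_continuous M2 \<epsilon>2" using assms by auto
  have q1: "q1 \<ge> 2" and q2: "q2 \<ge> 2" using assms by auto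
  have q1': "q1 \<ge> 1" and q2': "q2 \<ge> 1" using assms by auto
  note mu = same_dist
  have A: "p2 M1 \<epsilon>1 q1 i j k = p1 M1 \<epsilon>1 q1 i * p1 M1 \<epsilon>1 q1 j"
    if "(2 \<le> k \<and> k \<le> q1 - 1) \<or> k \<ge> q1 + 3" for i j k
    by (rule L_ind[OF i1 q1' disj_ok[OF q1' that]])
  have P1: "p1 M1 \<epsilon>1 q1 i = p1 M2 \<epsilon>2 q2 i" for i
    unfolding p1_def L_p1[OF i1 q1'] L_p1[OF i2 q2'] mu ..
  have C: "p2 M1 \<epsilon>1 q1 i j 1 = p2 M2 \<epsilon>2 q2 i j 1
      \<and> p2 M1 \<epsilon>1 q1 i j q1 = p2 M2 \<epsilon>2 q2 i j q2
      \<and> p2 M1 \<epsilon>1 q1 i j (q1 + 1) = p2 M2 \<epsilon>2 q2 i j (q2 + 1)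
      \<and> p2 M1 \<epsilon>1 q1 i j (q1 + 2) = p2 M2 \<epsilon>2 q2 i j (q2 + 2)" for i j
    unfolding case1[OF i1 q1] case1[OF i2 q2] caseq[OF i1 q1] caseq[OF i2 q2]
      caseq1[OF i1 q1] caseq1[OF i2 q2] caseq2[OF i1 q1] caseq2[OF i2 q2] mu by simp
  have S: "Sigma M1 \<epsilon>1 q1 i j = Sigma M2 \<epsilon>2 q2 i j" for i j
    unfolding Sigma_fin[OF i1 q1] Sigma_fin[OF i2 q2] using C[of i j] C[of j i] P1[of i] P1[of j] by simp
  show ?thesis using A C S by auto
qed

end
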